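(* For the $A_r$ $Q$-system with initial data $R_{\alpha,r-\alpha}=R_{\alpha,r-\alpha+1}=1$ for all $\alpha\in I_r$, $$\sum_{n\ge0}R_{1,n+r-1}\,t^n=1+t\,\frac{V_r(t)}{V_{r+1}(t)},\qquad V_m(t)=(-1)^m\,U_{2m}(\sqrt t),$$ where $U_m$ is the Chebyshev polynomial of the second kind, $U_m(2\cos\theta)=\frac{\sin(m+1)\theta}{\sin\theta}$ (each $V_m$ is a polynomial in $t$). For example, for $r=2$ the right side is $1+t\frac{1-3t+t^2}{1-6t+5t^2-t^3}$.
   Context: For $r\ge1$, $I_r=\{1,\dots,r\}$, the $A_r$ $Q$-system is the family $(R_{\alpha,n})_{0\le\alpha\le r+1,n\in\mathbb Z}$ with $R_{0,n}=R_{r+1,n}=1$ and $R_{\alpha,n+1}R_{\alpha,n-1}=R_{\alpha,n}^2+R_{\alpha+1,n}R_{\alpha-1,n}$ for $\alpha\in I_r$, $n\in\mathbb Z$; it is uniquely determined by the values $R_{\alpha,m_\alpha},R_{\alpha,m_\alpha+1}$ ($\alpha\in I_r$) for any $(m_1,\dots,m_r)\in\mathbb Z^r$ with $|m_{\alpha+1}-m_\alpha|\le1$. Here $m_\alpha=r-\alpha$. *)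

theory Defs
  imports Complex_Main "HOL-Computational_Algebra.Polynomial" "HOL-Computational_Algebra.Polynomial_FPS"
begin

text \<open>Chebyshev polynomials of the second kind, normalised so that
  U_m(2 cos theta) = sin((m+1) theta) / sin theta, i.e. U_0 = 1, U_1 = x,
  U_{m+2} = x U_{m+1} - U_m.\<close>
fun chebU :: "nat \<Rightarrow> real poly" where
  "chebU 0 = 1"
| "chebU (Suc 0) = [:0, 1:]"
| "chebU (Suc (Suc m)) = [:0, 1:] * chebU (Suc m) - chebU m"

definition chebV :: "nat \<Rightarrow> real poly" where
  "chebV m = (THE p. \<forall>t\<ge>0. poly p t = (-1) ^ m * poly (chebU (2 * m)) (sqrt t))"

definition is_Q_system :: "nat \<Rightarrow> (nat \<Rightarrow> int \<Rightarrow> real) \<Rightarrow> bool" where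
  "is_Q_system r R \<longleftrightarrow>
     (\<forall>n. R 0 n = 1) \<and> (\<forall>n. R (r + 1) n = 1) \<and>
     (\<forall>\<alpha> n. 1 \<le> \<alpha> \<and> \<alpha> \<le> r \<longrightarrow>
        R \<alpha> (n + 1) * R \<alpha> (n - 1) = (R \<alpha> n)\<^sup>2 + R (\<alpha> + 1) n * R (\<alpha> - 1) n)"

end

theory Submission
  imports Defs "Jordan_Normal_Form.Char_Poly"
begin


lemma sum_lessThan_single:
  assumes "k < (n::nat)" "\<And>i. i < n \<Longrightarrow> i \<noteq> k \<Longrightarrow> f i = 0"
  shows "(\<Sum>i<n. f i) = f k"
proof -
  have "(\<Sum>i<n. f i) = f k + (\<Sum>i\<in>{..<n} - {k}. f i)"
    using assms(1) by (intro sum.remove) auto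
  also have "(\<Sum>i\<in>{..<n} - {k}. f i) = 0"
    using assms(2) by (intro sum.neutral) auto
  finally show ?thesis by simp
qed

lemma det_col_single:
  assumes A: "A \<in> carrier_mat n n" and j: "j < n" and k: "k < n"
    and z: "\<And>i. i < n \<Longrightarrow> i \<noteq> k \<Longrightarrow> A $$ (i, j) = 0"
  shows "det A = A $$ (k, j) * cofactor A k j"
  using laplace_expansion_column[OF A j] sum_lessThan_single[OF k, of "\<lambda>i. A $$ (i, j) * cofactor A i j"] z
  by simp

lemma det_row_single:
  assumes A: "A \<in> carrier_mat n n" and i: "i < n" and k: "k < n"
    and z: "\<And>j. j < n \<Longrightarrow> j \<noteq> k \<Longrightarrow> A $$ (i, j) = 0"
  shows "det A = A $$ (i, k) * cofactor A i k"
  using laplace_expansion_row[OF A i] sum_lessThan_single[OF k, of "\<lambda>j. A $$ (i, j) * cofactor A i j"] z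
  by simp

lemma det_zero_col:
  assumes A: "A \<in> carrier_mat n n" and j: "j < n"
    and z: "\<And>i. i < n \<Longrightarrow> A $$ (i, j) = 0"
  shows "det A = 0"
  using laplace_expansion_column[OF A j] z by simp

lemma det_zero_row:
  assumes A: "A \<in> carrier_mat n n" and i: "i < n"
    and z: "\<And>j. j < n \<Longrightarrow> A $$ (i, j) = 0"
  shows "det A = 0"
  using laplace_expansion_row[OF A i] z by simp


lemma DJ_nonzero:
  fixes A :: "'a :: idom mat"
  assumes A: "A \<in> carrier_mat (Suc (Suc k)) (Suc (Suc k))" and dA: "det A \<noteq> 0"
  shows "det A * det (mat_delete (mat_delete A (Suc k) (Suc k)) 0 0)
       = det (mat_delete A 0 0) * det (mat_delete A (Suc k) (Suc k))
         - det (mat_delete A 0 (Suc k)) * det (mat_delete A (Suc k) 0)"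
proof -
  define n where "n = Suc (Suc k)"
  define l where "l = Suc k"
  have A': "A \<in> carrier_mat n n" using A n_def by simp
  have ln: "l < n" "0 < n" "l \<noteq> 0" unfolding l_def n_def by auto
  define B where "B = mat n n (\<lambda>(i,j). if j = 0 then cofactor A 0 i else if j = l then cofactor A l i
                        else (if i = j then 1 else 0))"
  have B: "B \<in> carrier_mat n n" unfolding B_def by simp
  have AC: "(\<Sum>m<n. A $$ (i, m) * cofactor A j m) = (if i = j then det A else 0)"
    if "i < n" "j < n" for i j
  proof -
    have "(A * adj_mat A) $$ (i, j) = (det A \<cdot>\<^sub>m 1\<^sub>m n) $$ (i, j)" using adj_mat(2)[OF A'] by simp
    moreover have "(A * adj_mat A) $$ (i, j) = (\<Sum>m<n. A $$ (i, m) * cofactor A j m)"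
      using that A' adj_mat(1)[OF A']
      by (simp add: scalar_prod_def adj_mat_def lessThan_atLeast0)
    ultimately show ?thesis using that by simp
  qed
  define P where "P = A * B"
  have P: "P \<in> carrier_mat n n" unfolding P_def using A' B by simp
  have Pij: "P $$ (i, j) = (if j = 0 then (if i = 0 then det A else 0)
      else if j = l then (if i = l then det A else 0) else A $$ (i, j))" if "i < n" "j < n" for i j
  proof -
    have "P $$ (i, j) = (\<Sum>m<n. A $$ (i, m) * B $$ (m, j))"
      using that A' B unfolding P_def by (simp add: scalar_prod_def lessThan_atLeast0)
    also have "\<dots> = (if j = 0 then (if i = 0 then det A else 0)
      else if j = l then (if i = l then det A else 0) else A $$ (i, j))"
    proof (cases "j = 0")
      case True
      have "(\<Sum>m<n. A $$ (i, m) * B $$ (m, j)) = (\<Sum>m<n. A $$ (i, m) * cofactor A 0 m)"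
        by (rule sum.cong, insert True, auto simp: B_def)
      then show ?thesis using AC[OF that(1) ln(2)] that ln True by simp
    next
      case False
      show ?thesis
      proof (cases "j = l")
        case True
        have "(\<Sum>m<n. A $$ (i, m) * B $$ (m, j)) = (\<Sum>m<n. A $$ (i, m) * cofactor A l m)"
          by (rule sum.cong, insert True False ln, auto simp: B_def)
        then show ?thesis using AC[OF that(1) ln(1)] that ln True False by simp
      next
        case False2: False
        have "(\<Sum>m<n. A $$ (i, m) * B $$ (m, j)) = A $$ (i, j) * B $$ (j, j)"
          by (rule sum_lessThan_single[OF that(2)], insert that False False2, auto simp: B_def)
        then show ?thesis using False False2 that by (simp add: B_def)
      qed
    qed
    finally show ?thesis .
  qed
  define Q where "Q = mat_delete P 0 0"
  have Q: "Q \<in> carrier_mat l l" unfolding Q_def using mat_delete_carrier[OF P, of 0 0] by (simp add: n_def l_def)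
  have detP: "det P = det A * det Q"
  proof -
    have "det P = P $$ (0,0) * cofactor P 0 0"
      by (rule det_col_single[OF P ln(2) ln(2)]) (simp add: Pij ln)
    then show ?thesis using Pij[OF ln(2) ln(2)] by (simp add: cofactor_def Q_def)
  qed
  have lk: "k < l" unfolding l_def by simp
  have Qij: "Q $$ (i, j) = P $$ (Suc i, Suc j)" if "i < l" "j < l" for i j
    using that P unfolding Q_def mat_delete_def by (simp add: n_def l_def)
  have detQ: "det Q = det A * det (mat_delete Q k k)"
  proof -
    have "det Q = Q $$ (k, k) * cofactor Q k k"
    proof (rule det_col_single[OF Q lk lk])
      fix i assume i: "i < l" "i \<noteq> k"
      have "Q $$ (i, k) = P $$ (Suc i, l)" using Qij[OF i(1) lk] by (simp add: l_def)
      also have "\<dots> = 0" using Pij[of "Suc i" l] i ln by (simp add: l_def n_def)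
      finally show "Q $$ (i, k) = 0" .
    qed
    moreover have "Q $$ (k, k) = det A" using Qij[OF lk lk] Pij[OF ln(1) ln(1)] ln by (simp add: l_def)
    ultimately show ?thesis unfolding cofactor_def by simp
  qed
  have QA: "mat_delete Q k k = mat_delete (mat_delete A l l) 0 0"
  proof (rule eq_matI)
    fix i j assume ij: "i < dim_row (mat_delete (mat_delete A l l) 0 0)"
      "j < dim_col (mat_delete (mat_delete A l l) 0 0)"
    then have ij': "i < k" "j < k" using A' by (auto simp: n_def l_def)
    have "mat_delete Q k k $$ (i, j) = Q $$ (i, j)" using ij' Q unfolding mat_delete_def by (simp add: l_def)
    also have "\<dots> = P $$ (Suc i, Suc j)" using Qij ij' lk by simp
    also have "\<dots> = A $$ (Suc i, Suc j)" using Pij[of "Suc i" "Suc j"] ij' by (simp add: l_def n_def)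
    also have "\<dots> = mat_delete (mat_delete A l l) 0 0 $$ (i, j)" using ij' A' unfolding mat_delete_def
      by (simp add: l_def n_def)
    finally show "mat_delete Q k k $$ (i, j) = mat_delete (mat_delete A l l) 0 0 $$ (i, j)" .
  qed (insert Q A', auto simp: n_def l_def)
  have detB: "det B = cofactor A 0 0 * cofactor A l l - cofactor A 0 l * cofactor A l 0"
  proof -
    have "det B = (\<Sum>i<n. B $$ (i, 0) * cofactor B i 0)" by (rule laplace_expansion_column[OF B ln(2)])
    also have "\<dots> = (\<Sum>i\<in>{0, l}. B $$ (i, 0) * cofactor B i 0)"
    proof (rule sum.mono_neutral_right)
      show "{0, l} \<subseteq> {..<n}" using ln by auto
      show "\<forall>i\<in>{..<n} - {0, l}. B $$ (i, 0) * cofactor B i 0 = 0"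
      proof
        fix i assume i: "i \<in> {..<n} - {0, l}"
        then obtain i' where i': "i = Suc i'" "i' < k" by (cases i) (auto simp: n_def l_def)
        have "det (mat_delete B i 0) = 0"
          by (rule det_zero_col[of _ l i'], insert B i i', auto simp: mat_delete_def B_def n_def l_def)
        then show "B $$ (i, 0) * cofactor B i 0 = 0" unfolding cofactor_def by simp
      qed
    qed auto
    also have "\<dots> = B $$ (0, 0) * cofactor B 0 0 + B $$ (l, 0) * cofactor B l 0" using ln by simp
    also have "cofactor B 0 0 = cofactor A l l"
    proof -
      define D where "D = mat_delete B 0 0"
      have D: "D \<in> carrier_mat l l" unfolding D_def using mat_delete_carrier[OF B] by (simp add: n_def l_def)
      have "det D = D $$ (k, k) * cofactor D k k"
        by (rule det_row_single[OF D lk lk], insert B, auto simp: D_def mat_delete_def B_def l_def n_def)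
      moreover have "mat_delete D k k = 1\<^sub>m k"
        by (rule eq_matI, insert B, auto simp: D_def mat_delete_def B_def l_def n_def)
      ultimately have "det D = D $$ (k, k)" unfolding cofactor_def by simp
      also have "\<dots> = cofactor A l l" using B by (simp add: D_def mat_delete_def B_def l_def n_def)
      finally show ?thesis unfolding cofactor_def D_def by simp
    qed
    also have "cofactor B l 0 = - cofactor A l 0"
    proof -
      define D where "D = mat_delete B l 0"
      have D: "D \<in> carrier_mat l l" unfolding D_def using mat_delete_carrier[OF B] by (simp add: n_def l_def)
      have "det D = D $$ (0, k) * cofactor D 0 k"
        by (rule det_row_single[OF D _ lk], insert B, auto simp: D_def mat_delete_def B_def l_def n_def)
      moreover have "mat_delete D 0 k = 1\<^sub>m k"
        by (rule eq_matI, insert B, auto simp: D_def mat_delete_def B_def l_def n_def)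
      moreover have "D $$ (0, k) = cofactor A l 0" using B by (simp add: D_def mat_delete_def B_def l_def n_def)
      ultimately have "det D = (-1)^k * cofactor A l 0" unfolding cofactor_def by simp
      then show ?thesis unfolding cofactor_def D_def by (simp add: l_def)
    qed
    also have "B $$ (0, 0) = cofactor A 0 0" using ln by (simp add: B_def)
    also have "B $$ (l, 0) = cofactor A 0 l" using ln by (simp add: B_def)
    finally show ?thesis by simp
  qed
  have "det A * det B = det A * (det A * det (mat_delete (mat_delete A l l) 0 0))"
  proof -
    have "det A * det B = det P" using det_mult[OF A' B] unfolding P_def by simp
    also have "\<dots> = det A * (det A * det (mat_delete Q k k))" using detP detQ by simp
    finally show ?thesis using QA by simp
  qed
  then have "det B = det A * det (mat_delete (mat_delete A l l) 0 0)" using dA by simp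
  then have "det A * det (mat_delete (mat_delete A l l) 0 0) = cofactor A 0 0 * cofactor A l l - cofactor A 0 l * cofactor A l 0"
    using detB by simp
  also have "\<dots> = det (mat_delete A 0 0) * det (mat_delete A l l) - det (mat_delete A 0 l) * det (mat_delete A l 0)"
  proof -
    have s: "((-1::'a)^(0+l)) * (-1)^(l+0) = 1" by (simp flip: power_add)
    have "cofactor A 0 l * cofactor A l 0 = (((-1::'a)^(0+l)) * (-1)^(l+0)) * (det (mat_delete A 0 l) * det (mat_delete A l 0))"
      unfolding cofactor_def by (simp only: mult_ac)
    then have "cofactor A 0 l * cofactor A l 0 = det (mat_delete A 0 l) * det (mat_delete A l 0)"
      using s by simp
    moreover have "cofactor A l l = det (mat_delete A l l)" unfolding cofactor_def by simp
    ultimately show ?thesis unfolding cofactor_def by simp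
  qed
  finally show ?thesis unfolding l_def .
qed


lemma poly0_hom: "comm_ring_hom (\<lambda>p. poly p (0::'a::comm_ring_1))"
  by (unfold_locales) auto

lemma map_mat_delete: "map_mat f (mat_delete M i j) = mat_delete (map_mat f M) i j"
  by (rule eq_matI) (auto simp: mat_delete_def)

lemma DJ:
  fixes A :: "'a :: idom mat"
  assumes A: "A \<in> carrier_mat (Suc (Suc k)) (Suc (Suc k))"
  shows "det A * det (mat_delete (mat_delete A (Suc k) (Suc k)) 0 0)
       = det (mat_delete A 0 0) * det (mat_delete A (Suc k) (Suc k))
         - det (mat_delete A 0 (Suc k)) * det (mat_delete A (Suc k) 0)"
proof -
  define n where "n = Suc (Suc k)"
  define Ap where "Ap = char_poly_matrix (- A)"
  have mA: "- A \<in> carrier_mat n n" using A n_def by simp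
  have Ap: "Ap \<in> carrier_mat (Suc (Suc k)) (Suc (Suc k))" unfolding Ap_def using mA n_def by simp
  have "coeff (char_poly (- A)) n = 1" using degree_monic_char_poly[OF mA] by simp
  then have "det Ap \<noteq> 0" unfolding Ap_def char_poly_def by auto
  note D = DJ_nonzero[OF Ap this]
  define h where "h = (\<lambda>p. poly p (0::'a))"
  have hom: "comm_ring_hom h" unfolding h_def by (rule poly0_hom)
  have hA: "map_mat h Ap = A"
    by (rule eq_matI, insert A, auto simp: h_def Ap_def char_poly_matrix_def)
  have key: "\<And>M. det (map_mat h M) = h (det M)" using comm_ring_hom.hom_det[OF hom] by simp
  have "h (det Ap * det (mat_delete (mat_delete Ap (Suc k) (Suc k)) 0 0))
       = h (det (mat_delete Ap 0 0) * det (mat_delete Ap (Suc k) (Suc k))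
         - det (mat_delete Ap 0 (Suc k)) * det (mat_delete Ap (Suc k) 0))" using D by simp
  moreover have e1: "det (mat_delete A i j) = h (det (mat_delete Ap i j))" for i j
    using key[of "mat_delete Ap i j"] map_mat_delete[of h Ap i j] hA by simp
  moreover have e2: "det (mat_delete (mat_delete A i j) i' j') = h (det (mat_delete (mat_delete Ap i j) i' j'))" for i j i' j'
    using key[of "mat_delete (mat_delete Ap i j) i' j'"] map_mat_delete[of h "mat_delete Ap i j" i' j']
      map_mat_delete[of h Ap i j] hA by simp
  moreover have e3: "det A = h (det Ap)" using key[of Ap] hA by simp
  ultimately show ?thesis unfolding h_def by simp
qed



definition LL :: "nat \<Rightarrow> real mat" where
  "LL N = mat N N (\<lambda>(i,j). if i = j \<or> i = Suc j then 1 else 0)"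

definition TT :: "nat \<Rightarrow> real mat" where
  "TT N = LL N * transpose_mat (LL N)"

lemma LL_carrier[simp]: "LL N \<in> carrier_mat N N" unfolding LL_def by simp
lemma LL_dim[simp]: "dim_row (LL N) = N" "dim_col (LL N) = N" unfolding LL_def by simp_all
lemma TT_carrier[simp]: "TT N \<in> carrier_mat N N" unfolding TT_def
  by (rule mult_carrier_mat[of _ N N _ N]) auto
lemma TT_dim[simp]: "dim_row (TT N) = N" "dim_col (TT N) = N" using TT_carrier[of N] unfolding carrier_mat_def by auto

lemma LL_index: "i < N \<Longrightarrow> j < N \<Longrightarrow> LL N $$ (i, j) = (if i = j \<or> i = Suc j then 1 else 0)"
  unfolding LL_def by simp

lemma TT_index:
  assumes ij: "i < N" "j < N"
  shows "TT N $$ (i, j) = (if i = j then (if i = 0 then 1 else 2) else if i = Suc j \<or> j = Suc i then 1 else 0)"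
proof -
  define g where "g k = (if k = j \<or> j = Suc k then 1 else (0::real))" for k
  have "TT N $$ (i, j) = (\<Sum>k<N. LL N $$ (i, k) * LL N $$ (j, k))"
    using ij unfolding TT_def by (simp add: scalar_prod_def lessThan_atLeast0 Matrix.row_def)
  also have "\<dots> = (\<Sum>k<N. (if k = i \<or> i = Suc k then g k else 0))"
    by (rule sum.cong, insert ij, auto simp: LL_index g_def)
  also have "\<dots> = (if i = j then (if i = 0 then 1 else 2) else if i = Suc j \<or> j = Suc i then 1 else 0)"
  proof (cases i)
    case 0
    have "(\<Sum>k<N. (if k = i \<or> i = Suc k then g k else 0)) = (\<Sum>k<N. (if k = 0 then g k else 0))"
      by (rule sum.cong, auto simp: 0)
    also have "\<dots> = g 0" using ij 0 by simp
    finally show ?thesis using 0 by (auto simp: g_def)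
  next
    case (Suc i')
    have "(\<Sum>k<N. (if k = i \<or> i = Suc k then g k else 0))
        = (\<Sum>k<N. (if k = i then g k else 0)) + (\<Sum>k<N. (if k = i' then g k else 0))"
      unfolding sum.distrib[symmetric] by (rule sum.cong, auto simp: Suc)
    also have "\<dots> = g i + g i'" using ij Suc by simp
    finally show ?thesis using Suc by (auto simp: g_def)
  qed
  finally show ?thesis .
qed

lemma det_LL: "det (LL N) = 1"
proof -
  have "det (LL N) = prod_list (diag_mat (LL N))"
    by (rule det_lower_triangular[of N], auto simp: LL_index)
  also have "diag_mat (LL N) = replicate N 1"
    unfolding diag_mat_def by (rule nth_equalityI, auto simp: LL_index)
  finally show ?thesis by simp
qed

lemma det_TT: "det (TT N) = 1"
proof -
  have "transpose_mat (LL N) \<in> carrier_mat N N" by simp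
  then show ?thesis unfolding TT_def using det_mult[OF LL_carrier] det_transpose[OF LL_carrier] det_LL by simp
qed

lemma TT_sym: "transpose_mat (TT N) = TT N"
proof -
  have "transpose_mat (LL N * transpose_mat (LL N)) = transpose_mat (transpose_mat (LL N)) * transpose_mat (LL N)"
    by (rule transpose_mult[of _ N N _ N]) auto
  then show ?thesis unfolding TT_def by simp
qed

definition SS :: "nat \<Rightarrow> real mat" where
  "SS N = adj_mat (TT N)"

lemma SS_carrier[simp]: "SS N \<in> carrier_mat N N" unfolding SS_def using adj_mat(1)[OF TT_carrier] .
lemma one_smult_one: "(1::real) \<cdot>\<^sub>m 1\<^sub>m N = 1\<^sub>m N" by (rule eq_matI) auto
lemma TT_SS: "TT N * SS N = 1\<^sub>m N" unfolding SS_def using adj_mat(2)[OF TT_carrier] det_TT one_smult_one by simp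
lemma SS_TT: "SS N * TT N = 1\<^sub>m N" unfolding SS_def using adj_mat(3)[OF TT_carrier] det_TT one_smult_one by simp

lemma det_SS: "det (SS N) = 1"
  using det_mult[OF TT_carrier SS_carrier, of N] TT_SS[of N] det_TT[of N] by simp

lemma pow_comm:
  assumes A: "A \<in> carrier_mat n n"
  shows "A ^\<^sub>m k * A = A * A ^\<^sub>m k"
proof (induction k)
  case 0 then show ?case using A by simp
next
  case (Suc k)
  have "A ^\<^sub>m Suc k * A = (A ^\<^sub>m k * A) * A" by simp
  also have "\<dots> = (A * A ^\<^sub>m k) * A" using Suc by simp
  also have "\<dots> = A * (A ^\<^sub>m k * A)" using A by (simp add: assoc_mult_mat[of _ n n _ n _ n])
  finally show ?case by simp
qed

lemma det_pow:
  fixes A :: "'a :: comm_ring_1 mat"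
  assumes A: "A \<in> carrier_mat n n"
  shows "det (A ^\<^sub>m k) = det A ^ k"
proof (induction k)
  case 0 then show ?case using A by simp
next
  case (Suc k) then show ?case using A det_mult[of "A ^\<^sub>m k" n A] by simp
qed

definition MM :: "nat \<Rightarrow> int \<Rightarrow> real mat" where
  "MM N q = (if q \<ge> 0 then TT N ^\<^sub>m nat q else SS N ^\<^sub>m nat (- q))"

lemma MM_carrier[simp]: "MM N q \<in> carrier_mat N N" unfolding MM_def by simp

lemma MM_det: "det (MM N q) = 1"
  unfolding MM_def using det_pow[OF TT_carrier] det_pow[OF SS_carrier] det_TT det_SS by simp

lemma MM_0: "MM N 0 = 1\<^sub>m N" unfolding MM_def by simp

lemma MM_1: "MM N 1 = TT N" unfolding MM_def by simp

lemma MM_Suc: "MM N (q + 1) = TT N * MM N q \<and> MM N (q + 1) = MM N q * TT N"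
proof (cases "q \<ge> 0")
  case True
  then have "nat (q + 1) = Suc (nat q)" by simp
  then show ?thesis using True pow_comm[OF TT_carrier] unfolding MM_def by simp
next
  case False
  define m where "m = nat (- q) - 1"
  have m: "q = - int (Suc m)" using False unfolding m_def by simp
  show ?thesis
  proof (cases m)
    case 0
    then show ?thesis using m TT_SS SS_TT unfolding MM_def by (simp add: SS_TT TT_SS)
  next
    case (Suc m')
    have q1: "q + 1 = - int (Suc m')" using m Suc by simp
    have "nat (- q) = Suc (Suc m')" using m Suc by simp
    then have A: "MM N q = SS N ^\<^sub>m Suc m' * SS N" using m unfolding MM_def by simp
    have "nat (- q - 1) = Suc m'" using q1 by simp
    then have B: "MM N (q + 1) = SS N ^\<^sub>m Suc m'" using q1 unfolding MM_def by simp
    define P where "P = SS N ^\<^sub>m Suc m'"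
    have P: "P \<in> carrier_mat N N" unfolding P_def by (rule pow_carrier_mat[OF SS_carrier])
    have A2: "MM N q = SS N * P" using A pow_comm[OF SS_carrier[of N], of "Suc m'"] unfolding P_def by simp
    have "TT N * MM N q = (TT N * SS N) * P" unfolding A2
      by (rule assoc_mult_mat[symmetric, of _ N N _ N _ N]) (auto simp: P)
    also have "\<dots> = MM N (q + 1)" using B TT_SS left_mult_one_mat[OF P] unfolding P_def by simp
    finally have 1: "MM N (q + 1) = TT N * MM N q" ..
    have "MM N q * TT N = P * (SS N * TT N)" unfolding A P_def[symmetric]
      by (rule assoc_mult_mat[of _ N N _ N _ N]) (auto simp: P)
    also have "\<dots> = MM N (q + 1)" using B SS_TT right_mult_one_mat[OF P] unfolding P_def by simp
    finally show ?thesis using 1 by simp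
  qed
qed

lemma MM_add_nat: "MM N (q + int j) = TT N ^\<^sub>m j * MM N q \<and> MM N (q + int j) = MM N q * TT N ^\<^sub>m j"
proof (induction j)
  case 0 then show ?case using left_mult_one_mat[OF MM_carrier[of N q]] right_mult_one_mat[OF MM_carrier[of N q]] by simp
next
  case (Suc j)
  have e: "q + int (Suc j) = (q + int j) + 1" by simp
  have "MM N (q + int (Suc j)) = TT N * MM N (q + int j)" using MM_Suc e by metis
  also have "\<dots> = TT N * (TT N ^\<^sub>m j * MM N q)" using Suc by simp
  also have "\<dots> = (TT N * TT N ^\<^sub>m j) * MM N q"
    by (simp add: assoc_mult_mat[of _ N N _ N _ N])
  also have "\<dots> = TT N ^\<^sub>m Suc j * MM N q"
    using pow_comm[OF TT_carrier[of N], of j] by simp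
  finally have 1: "MM N (q + int (Suc j)) = TT N ^\<^sub>m Suc j * MM N q" .
  have "MM N (q + int (Suc j)) = MM N (q + int j) * TT N" using MM_Suc e by metis
  also have "\<dots> = (MM N q * TT N ^\<^sub>m j) * TT N" using conjunct2[OF Suc.IH] by simp
  also have "\<dots> = MM N q * (TT N ^\<^sub>m j * TT N)"
    by (rule assoc_mult_mat[of "MM N q" N N "TT N ^\<^sub>m j" N "TT N" N]) auto
  also have "\<dots> = MM N q * TT N ^\<^sub>m Suc j" by simp
  finally show ?case using 1 by simp
qed



definition uu :: "nat \<Rightarrow> int \<Rightarrow> real" where
  "uu N q = MM N q $$ (0, 0)"

definition HH :: "nat \<Rightarrow> nat \<Rightarrow> int \<Rightarrow> real mat" where
  "HH N a q = mat a a (\<lambda>(i,j). uu N (q + int i + int j))"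

definition FF :: "nat \<Rightarrow> nat \<Rightarrow> int \<Rightarrow> real" where
  "FF N a q = det (HH N a q)"

lemma HH_carrier[simp]: "HH N a q \<in> carrier_mat a a" unfolding HH_def by simp

lemma FF_0: "FF N 0 q = 1"
  unfolding FF_def by (rule det_dim_zero) simp

lemma FF_1: "FF N 1 q = uu N q"
proof -
  have "FF N 1 q = HH N 1 q $$ (0, 0)" unfolding FF_def by (rule det_single) simp
  then show ?thesis unfolding HH_def by simp
qed

lemma FF_Q:
  "FF N (Suc (Suc b)) q * FF N b (q + 2)
     = FF N (Suc b) (q + 2) * FF N (Suc b) q - (FF N (Suc b) (q + 1))\<^sup>2"
proof -
  define A where "A = HH N (Suc (Suc b)) q"
  have A: "A \<in> carrier_mat (Suc (Suc b)) (Suc (Suc b))" unfolding A_def by simp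
  have 1: "mat_delete A 0 0 = HH N (Suc b) (q + 2)"
    by (rule eq_matI) (auto simp: A_def HH_def mat_delete_def algebra_simps)
  have 2: "mat_delete A (Suc b) (Suc b) = HH N (Suc b) q"
    by (rule eq_matI) (auto simp: A_def HH_def mat_delete_def algebra_simps)
  have 3: "mat_delete A 0 (Suc b) = HH N (Suc b) (q + 1)"
    by (rule eq_matI) (auto simp: A_def HH_def mat_delete_def algebra_simps)
  have 4: "mat_delete A (Suc b) 0 = HH N (Suc b) (q + 1)"
    by (rule eq_matI) (auto simp: A_def HH_def mat_delete_def algebra_simps)
  have 5: "mat_delete (mat_delete A (Suc b) (Suc b)) 0 0 = HH N b (q + 2)"
    unfolding 2 by (rule eq_matI) (auto simp: HH_def mat_delete_def algebra_simps)
  show ?thesis using DJ[OF A, unfolded 5, unfolded 1 2 3 4] unfolding FF_def A_def[symmetric] by (simp add: power2_eq_square)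
qed

definition YY :: "nat \<Rightarrow> real mat" where
  "YY N = mat N N (\<lambda>(k,j). (TT N ^\<^sub>m j) $$ (k, 0))"

lemma YY_carrier[simp]: "YY N \<in> carrier_mat N N" unfolding YY_def by simp

lemma TT_pow_tri:
  "(\<forall>k<N. j < k \<longrightarrow> (TT N ^\<^sub>m j) $$ (k, 0) = 0) \<and> (j < N \<longrightarrow> (TT N ^\<^sub>m j) $$ (j, 0) = 1)"
proof (induction j)
  case 0
  then show ?case by auto
next
  case (Suc j)
  have e: "TT N ^\<^sub>m Suc j = TT N * TT N ^\<^sub>m j" using pow_comm[OF TT_carrier[of N], of j] by simp
  have ent: "(TT N ^\<^sub>m Suc j) $$ (k, 0) = (\<Sum>l<N. TT N $$ (k, l) * (TT N ^\<^sub>m j) $$ (l, 0))"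
    if "k < N" for k
    using that unfolding e by (simp add: scalar_prod_def lessThan_atLeast0 Matrix.row_def Matrix.col_def)
  have A: "(TT N ^\<^sub>m Suc j) $$ (k, 0) = 0" if k: "k < N" "Suc j < k" for k
  proof -
    have "(\<Sum>l<N. TT N $$ (k, l) * (TT N ^\<^sub>m j) $$ (l, 0)) = 0"
    proof (rule sum.neutral, intro ballI)
      fix l assume l: "l \<in> {..<N}"
      show "TT N $$ (k, l) * (TT N ^\<^sub>m j) $$ (l, 0) = 0"
      proof (cases "Suc l < k")
        case True
        then have "TT N $$ (k, l) = 0" using l k by (simp add: TT_index)
        then show ?thesis by simp
      next
        case False
        then have "(TT N ^\<^sub>m j) $$ (l, 0) = 0" using Suc.IH l k by auto
        then show ?thesis by simp
      qed
    qed
    then show ?thesis using ent[OF k(1)] by simp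
  qed
  have B: "(TT N ^\<^sub>m Suc j) $$ (Suc j, 0) = 1" if k: "Suc j < N"
  proof -
    have "(\<Sum>l<N. TT N $$ (Suc j, l) * (TT N ^\<^sub>m j) $$ (l, 0)) = TT N $$ (Suc j, j) * (TT N ^\<^sub>m j) $$ (j, 0)"
    proof (rule sum_lessThan_single)
      show "j < N" using k by simp
      fix l assume l: "l < N" "l \<noteq> j"
      show "TT N $$ (Suc j, l) * (TT N ^\<^sub>m j) $$ (l, 0) = 0"
      proof (cases "l < j")
        case True
        then have "TT N $$ (Suc j, l) = 0" using l k by (simp add: TT_index)
        then show ?thesis by simp
      next
        case False
        then have "(TT N ^\<^sub>m j) $$ (l, 0) = 0" using Suc.IH l k by auto
        then show ?thesis by simp
      qed
    qed
    also have "\<dots> = 1" using Suc.IH k by (simp add: TT_index)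
    finally show ?thesis using ent[OF k] by simp
  qed
  show ?case using A B by auto
qed

lemma YY_upper: "i < N \<Longrightarrow> j < i \<Longrightarrow> YY N $$ (i, j) = 0"
  unfolding YY_def using TT_pow_tri by simp

lemma YY_diag: "i < N \<Longrightarrow> YY N $$ (i, i) = 1"
  unfolding YY_def using TT_pow_tri by simp

lemma det_unitri:
  assumes Z: "Z \<in> carrier_mat n n" and up: "\<And>i j. i < n \<Longrightarrow> j < i \<Longrightarrow> Z $$ (i, j) = 0"
    and d: "\<And>i. i < n \<Longrightarrow> Z $$ (i, i) = 1"
  shows "det Z = 1"
proof -
  have "det Z = prod_list (diag_mat Z)"
    by (rule det_upper_triangular[OF _ Z]) (insert Z up, auto simp: upper_triangular_def)
  also have "diag_mat Z = replicate n 1"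
    unfolding diag_mat_def by (rule nth_equalityI, insert Z d, auto)
  finally show ?thesis by simp
qed

lemma det_YY: "det (YY N) = 1"
  by (rule det_unitri[OF YY_carrier]) (auto simp: YY_upper YY_diag)

lemma transpose_pow:
  fixes A :: "'a :: comm_ring_1 mat"
  assumes A: "A \<in> carrier_mat n n"
  shows "transpose_mat (A ^\<^sub>m k) = (transpose_mat A) ^\<^sub>m k"
proof (induction k)
  case 0 then show ?case using A by simp
next
  case (Suc k)
  have "transpose_mat (A ^\<^sub>m Suc k) = transpose_mat (A ^\<^sub>m k * A)" by simp
  also have "\<dots> = transpose_mat A * transpose_mat (A ^\<^sub>m k)"
    by (rule transpose_mult[of _ n n _ n]) (insert A, auto)
  also have "\<dots> = transpose_mat A * (transpose_mat A) ^\<^sub>m k" using Suc by simp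
  also have "\<dots> = (transpose_mat A) ^\<^sub>m k * transpose_mat A"
    using pow_comm[of "transpose_mat A" n k] A by simp
  finally show ?case by simp
qed

lemma TT_pow_sym: "i < N \<Longrightarrow> k < N \<Longrightarrow> (TT N ^\<^sub>m j) $$ (i, k) = (TT N ^\<^sub>m j) $$ (k, i)"
proof -
  assume ik: "i < N" "k < N"
  have "(TT N ^\<^sub>m j) $$ (i, k) = transpose_mat (TT N ^\<^sub>m j) $$ (k, i)" using ik by simp
  also have "transpose_mat (TT N ^\<^sub>m j) = TT N ^\<^sub>m j"
    using transpose_pow[OF TT_carrier[of N], of j] TT_sym by simp
  finally show ?thesis .
qed



lemma YY_dim[simp]: "dim_row (YY N) = N" "dim_col (YY N) = N" unfolding YY_def by simp_all
lemma MM_dim[simp]: "dim_row (MM N q) = N" "dim_col (MM N q) = N" using MM_carrier[of N q] unfolding carrier_mat_def by simp_all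
lemma HH_dim[simp]: "dim_row (HH N a q) = a" "dim_col (HH N a q) = a" unfolding HH_def by simp_all

lemma uu_gram:
  assumes ij: "i < N" "j < N"
  shows "uu N (q + int i + int j) = (\<Sum>k<N. YY N $$ (k, i) * (\<Sum>l<N. MM N q $$ (k, l) * YY N $$ (l, j)))"
proof -
  have e1: "MM N (q + int i + int j) = TT N ^\<^sub>m i * MM N (q + int j)"
    using MM_add_nat[of N "q + int j" i] by (simp add: algebra_simps)
  have e2: "MM N (q + int j) = MM N q * TT N ^\<^sub>m j" using conjunct2[OF MM_add_nat[of N q j]] .
  have "uu N (q + int i + int j) = (TT N ^\<^sub>m i * (MM N q * TT N ^\<^sub>m j)) $$ (0, 0)"
    unfolding uu_def e1 e2 ..
  also have "\<dots> = (\<Sum>k<N. (TT N ^\<^sub>m i) $$ (0, k) * (\<Sum>l<N. MM N q $$ (k, l) * (TT N ^\<^sub>m j) $$ (l, 0)))"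
    using ij by (simp add: scalar_prod_def lessThan_atLeast0 Matrix.row_def Matrix.col_def)
  also have "\<dots> = (\<Sum>k<N. YY N $$ (k, i) * (\<Sum>l<N. MM N q $$ (k, l) * YY N $$ (l, j)))"
    by (rule sum.cong, simp, insert ij, auto simp: YY_def TT_pow_sym intro!: sum.cong)
  finally show ?thesis .
qed

lemma FF_full: "FF N N q = 1"
proof -
  have "HH N N q = transpose_mat (YY N) * (MM N q * YY N)"
    by (rule eq_matI) (auto simp: HH_def uu_gram scalar_prod_def lessThan_atLeast0 Matrix.row_def Matrix.col_def)
  then have "FF N N q = det (transpose_mat (YY N)) * det (MM N q * YY N)"
    unfolding FF_def using det_mult[of "transpose_mat (YY N)" N "MM N q * YY N"]
      mult_carrier_mat[OF MM_carrier YY_carrier, of N q] by simp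
  also have "\<dots> = 1" using det_mult[OF MM_carrier YY_carrier, of N q] MM_det det_YY
      det_transpose[OF YY_carrier] by simp
  finally show ?thesis .
qed

lemma det_gram_unitri:
  fixes Z :: "nat \<Rightarrow> nat \<Rightarrow> real"
  assumes up: "\<And>i k. i < k \<Longrightarrow> k < N \<Longrightarrow> Z k i = 0"
    and d: "\<And>i. i < N \<Longrightarrow> Z i i = 1" and a: "a \<le> N"
  shows "det (mat a a (\<lambda>(i,j). \<Sum>k<N. Z k i * Z k j)) = 1"
proof -
  define Za where "Za = mat a a (\<lambda>(k,i). Z k i)"
  have Za: "Za \<in> carrier_mat a a" unfolding Za_def by simp
  have eq: "mat a a (\<lambda>(i,j). \<Sum>k<N. Z k i * Z k j) = transpose_mat Za * Za"
  proof (rule eq_matI)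
    fix i j assume ij: "i < dim_row (transpose_mat Za * Za)" "j < dim_col (transpose_mat Za * Za)"
    then have ij': "i < a" "j < a" using Za by auto
    have "(\<Sum>k<N. Z k i * Z k j) = (\<Sum>k<a. Z k i * Z k j)"
    proof (rule sum.mono_neutral_right)
      show "\<forall>k\<in>{..<N} - {..<a}. Z k i * Z k j = 0" using up ij' by auto
    qed (insert a, auto)
    then show "mat a a (\<lambda>(i,j). \<Sum>k<N. Z k i * Z k j) $$ (i, j) = (transpose_mat Za * Za) $$ (i, j)"
      using ij' by (simp add: Za_def scalar_prod_def lessThan_atLeast0 Matrix.row_def Matrix.col_def)
  qed (insert Za, auto)
  have dZ: "det Za = 1"
    by (rule det_unitri[OF Za]) (insert up d a, auto simp: Za_def)
  show ?thesis unfolding eq using det_mult[of "transpose_mat Za" a Za] Za det_transpose[OF Za] dZ by simp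
qed

lemma FF_stair0: "a \<le> N \<Longrightarrow> FF N a 0 = 1"
proof -
  assume a: "a \<le> N"
  have "HH N a 0 = mat a a (\<lambda>(i,j). \<Sum>k<N. YY N $$ (k, i) * YY N $$ (k, j))"
  proof (rule eq_matI)
    fix i j assume "i < dim_row (mat a a (\<lambda>(i,j). \<Sum>k<N. YY N $$ (k, i) * YY N $$ (k, j)))"
      "j < dim_col (mat a a (\<lambda>(i,j). \<Sum>k<N. YY N $$ (k, i) * YY N $$ (k, j)))"
    then have ij: "i < N" "j < N" "i < a" "j < a" using a by auto
    have "uu N (0 + int i + int j) = (\<Sum>k<N. YY N $$ (k, i) * (\<Sum>l<N. MM N 0 $$ (k, l) * YY N $$ (l, j)))"
      by (rule uu_gram[OF ij(1,2)])
    also have "\<dots> = (\<Sum>k<N. YY N $$ (k, i) * YY N $$ (k, j))"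
    proof (rule sum.cong[OF refl])
      fix k assume k: "k \<in> {..<N}"
      have "(\<Sum>l<N. MM N 0 $$ (k, l) * YY N $$ (l, j)) = MM N 0 $$ (k, k) * YY N $$ (k, j)"
        by (rule sum_lessThan_single, insert k, auto simp: MM_0)
      then show "YY N $$ (k, i) * (\<Sum>l<N. MM N 0 $$ (k, l) * YY N $$ (l, j)) = YY N $$ (k, i) * YY N $$ (k, j)"
        using k by (simp add: MM_0)
    qed
    finally show "HH N a 0 $$ (i, j) = mat a a (\<lambda>(i,j). \<Sum>k<N. YY N $$ (k, i) * YY N $$ (k, j)) $$ (i, j)"
      using ij by (simp add: HH_def)
  qed auto
  then show ?thesis unfolding FF_def
    using det_gram_unitri[of N "\<lambda>k i. YY N $$ (k, i)" a] a YY_upper YY_diag by simp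
qed


definition zf :: "nat \<Rightarrow> nat \<Rightarrow> nat \<Rightarrow> real" where
  "zf N m i = (\<Sum>k<N. LL N $$ (k, m) * YY N $$ (k, i))"

lemma uu_one_gram:
  assumes ij: "i < N" "j < N"
  shows "uu N (1 + int i + int j) = (\<Sum>m<N. zf N m i * zf N m j)"
proof -
  have T: "MM N 1 $$ (k, l) = (\<Sum>m<N. LL N $$ (k, m) * LL N $$ (l, m))" if "k < N" "l < N" for k l
    using that unfolding MM_1 TT_def by (simp add: scalar_prod_def lessThan_atLeast0 Matrix.row_def Matrix.col_def)
  have "uu N (1 + int i + int j) = (\<Sum>k<N. YY N $$ (k, i) * (\<Sum>l<N. MM N 1 $$ (k, l) * YY N $$ (l, j)))"
    by (rule uu_gram[OF ij])
  also have "\<dots> = (\<Sum>k<N. \<Sum>l<N. \<Sum>m<N. (LL N $$ (k, m) * YY N $$ (k, i)) * (LL N $$ (l, m) * YY N $$ (l, j)))"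
    by (rule sum.cong[OF refl], auto simp: T sum_distrib_left sum_distrib_right mult_ac intro!: sum.cong)
  also have "\<dots> = (\<Sum>k<N. \<Sum>m<N. \<Sum>l<N. (LL N $$ (k, m) * YY N $$ (k, i)) * (LL N $$ (l, m) * YY N $$ (l, j)))"
    by (rule sum.cong[OF refl], rule sum.swap)
  also have "\<dots> = (\<Sum>m<N. \<Sum>k<N. \<Sum>l<N. (LL N $$ (k, m) * YY N $$ (k, i)) * (LL N $$ (l, m) * YY N $$ (l, j)))"
    by (rule sum.swap)
  also have "\<dots> = (\<Sum>m<N. zf N m i * zf N m j)"
    unfolding zf_def by (simp add: sum_product)
  finally show ?thesis .
qed

lemma zf_upper: "i < m \<Longrightarrow> m < N \<Longrightarrow> zf N m i = 0"
  unfolding zf_def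
proof (rule sum.neutral, intro ballI)
  fix k assume im: "i < m" "m < N" and k: "k \<in> {..<N}"
  show "LL N $$ (k, m) * YY N $$ (k, i) = 0"
  proof (cases "k = m \<or> k = Suc m")
    case True then show ?thesis using YY_upper[of k N i] im k by auto
  next
    case False then show ?thesis using k im by (simp add: LL_index)
  qed
qed

lemma zf_diag: "i < N \<Longrightarrow> zf N i i = 1"
proof -
  assume i: "i < N"
  have "zf N i i = LL N $$ (i, i) * YY N $$ (i, i)" unfolding zf_def
  proof (rule sum_lessThan_single[OF i])
    fix k assume k: "k < N" "k \<noteq> i"
    show "LL N $$ (k, i) * YY N $$ (k, i) = 0"
    proof (cases "k = Suc i")
      case True then show ?thesis using YY_upper[of k N i] k by auto
    next
      case False then show ?thesis using k i by (simp add: LL_index)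
    qed
  qed
  then show ?thesis using i by (simp add: LL_index YY_diag)
qed

lemma FF_stair1: "a \<le> N \<Longrightarrow> FF N a 1 = 1"
proof -
  assume a: "a \<le> N"
  have "HH N a 1 = mat a a (\<lambda>(i,j). \<Sum>m<N. zf N m i * zf N m j)"
    by (rule eq_matI) (insert a, auto simp: HH_def uu_one_gram)
  then show ?thesis unfolding FF_def
    using det_gram_unitri[of N "zf N" a] a zf_upper zf_diag by simp
qed



fun sp :: "nat \<Rightarrow> real poly" where
  "sp 0 = 0"
| "sp (Suc 0) = 1"
| "sp (Suc (Suc k)) = [:2, -1:] * sp (Suc k) - sp k"

definition evp :: "nat \<Rightarrow> real poly" where
  "evp m = sp (Suc m) - sp m"

lemma chebU_rec: "poly (chebU (Suc (Suc m))) x = x * poly (chebU (Suc m)) x - poly (chebU m) x"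
  by simp

lemma chebU_even_rec:
  "poly (chebU (2 * m + 4)) x = (x\<^sup>2 - 2) * poly (chebU (2 * m + 2)) x - poly (chebU (2 * m)) x"
proof -
  define f where "f k = poly (chebU k) x" for k
  have h1: "f (2 * m + 4) = x * f (2 * m + 3) - f (2 * m + 2)"
    using chebU_rec[of "2 * m + 2" x] unfolding f_def by (simp add: numeral_eq_Suc)
  have h2: "f (2 * m + 3) = x * f (2 * m + 2) - f (2 * m + 1)"
    using chebU_rec[of "2 * m + 1" x] unfolding f_def by (simp add: numeral_eq_Suc)
  have h3: "f (2 * m + 2) = x * f (2 * m + 1) - f (2 * m)"
    using chebU_rec[of "2 * m" x] unfolding f_def by (simp add: numeral_eq_Suc)
  have "f (2 * m + 4) = (x\<^sup>2 - 2) * f (2 * m + 2) - f (2 * m)"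
    unfolding h1 h2 h3 by (simp add: algebra_simps power2_eq_square)
  then show ?thesis unfolding f_def .
qed

lemma evp_rec: "evp (Suc (Suc m)) = [:2, -1:] * evp (Suc m) - evp m"
proof -
  define c where "c = [:2, -1::real:]"
  have s: "\<And>k. sp (Suc (Suc k)) = c * sp (Suc k) - sp k" unfolding c_def by simp
  show ?thesis unfolding evp_def c_def[symmetric] s by (simp add: algebra_simps del: sp.simps)
qed

lemma evp_cheb: "t \<ge> 0 \<Longrightarrow> poly (evp m) t = (-1) ^ m * poly (chebU (2 * m)) (sqrt t)"
proof (induction m rule: nat_less_induct)
  case (1 m)
  assume t: "t \<ge> 0"
  have st: "(sqrt t)\<^sup>2 = t" using t by simp
  show ?case
  proof (cases m)
    case 0 then show ?thesis by (simp add: evp_def)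
  next
    case (Suc m1)
    show ?thesis
    proof (cases m1)
      case 0
      have "poly (evp 1) t = 1 - t" by (simp add: evp_def numeral_eq_Suc)
      moreover have "poly (chebU 2) (sqrt t) = t - 1" using st by (simp add: numeral_eq_Suc power2_eq_square)
      ultimately show ?thesis using Suc 0 by simp
    next
      case (Suc m2)
      have m: "m = Suc (Suc m2)" using \<open>m = Suc m1\<close> Suc by simp
      have IH1: "poly (evp (Suc m2)) t = (-1) ^ Suc m2 * poly (chebU (2 * Suc m2)) (sqrt t)"
        using "1.IH" t m by auto
      have IH2: "poly (evp m2) t = (-1) ^ m2 * poly (chebU (2 * m2)) (sqrt t)"
        using "1.IH" t m by auto
      have "poly (evp m) t = (2 - t) * poly (evp (Suc m2)) t - poly (evp m2) t"
        unfolding m evp_rec by (simp add: algebra_simps)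
      also have "\<dots> = (-1) ^ m2 * ((t - 2) * poly (chebU (2 * Suc m2)) (sqrt t) - poly (chebU (2 * m2)) (sqrt t))"
        unfolding IH1 IH2 by (simp add: algebra_simps del: chebU.simps)
      also have "\<dots> = (-1) ^ m * poly (chebU (2 * m)) (sqrt t)"
      proof -
        have "poly (chebU (2 * m2 + 4)) (sqrt t) = (t - 2) * poly (chebU (2 * m2 + 2)) (sqrt t) - poly (chebU (2 * m2)) (sqrt t)"
          using chebU_even_rec[of m2 "sqrt t"] st by (simp del: chebU.simps)
        moreover have "2 * m = 2 * m2 + 4" "2 * Suc m2 = 2 * m2 + 2" using m by simp_all
        moreover have "(-1::real) ^ m = (-1) ^ m2" using m by simp
        ultimately show ?thesis by (simp del: chebU.simps)
      qed
      finally show ?thesis by simp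
    qed
  qed
qed

lemma chebV_ev: "chebV m = evp m"
  unfolding chebV_def
proof (rule the_equality)
  show "\<forall>t\<ge>0. poly (evp m) t = (- 1) ^ m * poly (chebU (2 * m)) (sqrt t)" using evp_cheb by simp
next
  fix p assume p: "\<forall>t\<ge>0. poly p t = (- 1) ^ m * poly (chebU (2 * m)) (sqrt t)"
  show "p = evp m"
  proof (rule ccontr)
    assume "p \<noteq> evp m"
    then have "p - evp m \<noteq> 0" by simp
    then have fin: "finite {x. poly (p - evp m) x = 0}" by (rule poly_roots_finite)
    have "{0..1::real} \<subseteq> {x. poly (p - evp m) x = 0}" using p evp_cheb by auto
    then have "finite {0..1::real}" using fin finite_subset by blast
    then show False using infinite_Icc[of "0::real" 1] by simp
  qed
qed



lemma sp_at0: "poly (sp k) 0 = real k"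
  by (induction k rule: sp.induct) (auto simp: algebra_simps)

lemma evp_at0: "fps_nth (fps_of_poly (evp k)) 0 = 1"
  using sp_at0[of k] sp_at0[of "Suc k"] by (simp add: evp_def poly_0_coeff_0[symmetric])

lemma two_minus_X: "[:2, -1:] = (2::real poly) - [:0, 1:]"
proof -
  have "poly [:2, -1:] = poly ((2::real poly) - [:0, 1:])" by (rule ext) simp
  then show ?thesis by (simp only: poly_eq_poly_eq_iff)
qed

definition zz :: "nat \<Rightarrow> nat \<Rightarrow> real fps" where
  "zz r i = fps_of_poly ((-1) ^ i * sp (Suc r - i)) * inverse (fps_of_poly (evp (Suc r)))"

lemma Vinv: "fps_of_poly (evp (Suc r)) * inverse (fps_of_poly (evp (Suc r))) = 1"
  using evp_at0[of "Suc r"] by (simp add: inverse_mult_eq_1')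

lemma zz_row0: "(1 - fps_X) * zz r 0 + zz r 1 = 1"
proof -
  define c where "c = [:2, -1::real:]"
  have s: "sp (Suc (Suc r)) = c * sp (Suc r) - sp r" unfolding c_def by simp
  define Xp where "Xp = [:0, 1::real:]"
  have p: "(1 - Xp) * sp (Suc r) - sp r = evp (Suc r)"
    unfolding evp_def s c_def two_minus_X Xp_def[symmetric] by (simp add: algebra_simps del: sp.simps)
  have "(1 - fps_X) * zz r 0 + zz r 1
      = fps_of_poly ((1 - Xp) * sp (Suc r) - sp r) * inverse (fps_of_poly (evp (Suc r)))"
    unfolding zz_def fps_of_poly_mult fps_of_poly_diff fps_of_poly_1 Xp_def fps_of_poly_fps_X
    by (simp add: algebra_simps fps_of_poly_uminus del: sp.simps)
  also have "\<dots> = 1" unfolding p by (rule Vinv)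
  finally show ?thesis .
qed

lemma zz_rowi:
  assumes j: "j < r"
  shows "zz r j + (2 - fps_X) * zz r (Suc j) + zz r (Suc (Suc j)) = 0"
proof -
  define d where "d = r - Suc j"
  have e1: "Suc r - j = Suc (Suc d)" "Suc r - Suc j = Suc d" "Suc r - Suc (Suc j) = d"
    using j unfolding d_def by auto
  define c where "c = [:2, -1::real:]"
  have s: "sp (Suc (Suc d)) = c * sp (Suc d) - sp d" unfolding c_def by simp
  have p: "(-1) ^ j * sp (Suc (Suc d)) + (2 - [:0, 1:]) * ((-1) ^ Suc j * sp (Suc d)) + (-1) ^ Suc (Suc j) * sp d = 0"
    unfolding s c_def two_minus_X by (simp add: algebra_simps del: sp.simps)
  have "zz r j + (2 - fps_X) * zz r (Suc j) + zz r (Suc (Suc j))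
     = fps_of_poly ((-1) ^ j * sp (Suc (Suc d)) + (2 - [:0, 1:]) * ((-1) ^ Suc j * sp (Suc d)) + (-1) ^ Suc (Suc j) * sp d)
       * inverse (fps_of_poly (evp (Suc r)))"
    unfolding zz_def e1 by (simp only: fps_of_poly_mult fps_of_poly_add fps_of_poly_diff fps_of_poly_fps_X
        fps_of_poly_numeral fps_of_poly_power fps_of_poly_uminus fps_of_poly_1 algebra_simps)
  also have "\<dots> = 0" unfolding p by simp
  finally show ?thesis .
qed

lemma zz_last: "zz r (Suc r) = 0"
  unfolding zz_def by simp



lemma fps_nth_two: "fps_nth (2 * f) n = 2 * fps_nth (f::real fps) n"
  by (simp only: mult_2 fps_add_nth)

definition xv :: "nat \<Rightarrow> nat \<Rightarrow> nat \<Rightarrow> real" where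
  "xv r n i = fps_nth (zz r i) n"

lemma xv_row0: "xv r n 0 + xv r n 1 = (if n = 0 then 1 else xv r (n - 1) 0)"
proof -
  have "fps_nth ((1 - fps_X) * zz r 0 + zz r 1) n = fps_nth (1::real fps) n" using zz_row0 by simp
  moreover have "(1 - fps_X) * zz r 0 + zz r 1 = zz r 0 - fps_X * zz r 0 + zz r 1" by (simp add: algebra_simps)
  ultimately show ?thesis unfolding xv_def by (cases n) (simp_all add: fps_X_mult_nth)
qed

lemma xv_rowi: "j < r \<Longrightarrow> xv r n j + 2 * xv r n (Suc j) + xv r n (Suc (Suc j))
    = (if n = 0 then 0 else xv r (n - 1) (Suc j))"
proof -
  assume j: "j < r"
  have "fps_nth (zz r j + (2 - fps_X) * zz r (Suc j) + zz r (Suc (Suc j))) n = 0" using zz_rowi[OF j] by simp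
  moreover have "zz r j + (2 - fps_X) * zz r (Suc j) + zz r (Suc (Suc j))
      = zz r j + zz r (Suc j) + zz r (Suc j) - fps_X * zz r (Suc j) + zz r (Suc (Suc j))"
  proof -
    have "(2 - fps_X) * zz r (Suc j) = 2 * zz r (Suc j) - fps_X * zz r (Suc j)" by (rule left_diff_distrib)
    also have "2 * zz r (Suc j) = zz r (Suc j) + zz r (Suc j)" by (rule mult_2)
    finally show ?thesis by (simp only: add_diff_eq add.assoc)
  qed
  ultimately show ?thesis unfolding xv_def by (cases n) (simp_all add: fps_X_mult_nth fps_nth_two)
qed

lemma xv_last: "xv r n (Suc r) = 0"
  unfolding xv_def using zz_last by simp

lemma TT_mult_sum:
  assumes i: "i < N"
  shows "(\<Sum>j<N. TT N $$ (i, j) * v j) = (if i = 0 then v 0 else v (i - 1) + 2 * v i) + (if Suc i < N then v (Suc i) else 0)"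
proof -
  have "(\<Sum>j<N. TT N $$ (i, j) * v j) = (\<Sum>j<N. (if j = i then (if i = 0 then 1 else 2) * v j else 0)
       + (if j = Suc i then v j else 0) + (if Suc j = i then v j else 0))"
    by (rule sum.cong, insert i, auto simp: TT_index)
  also have "\<dots> = (if i = 0 then 1 else 2) * v i + (if Suc i < N then v (Suc i) else 0)
      + (\<Sum>j<N. (if Suc j = i then v j else 0))"
    using i by (simp add: sum.distrib)
  also have "(\<Sum>j<N. (if Suc j = i then v j else 0)) = (if i = 0 then 0 else v (i - 1))"
  proof (cases i)
    case 0 then show ?thesis by simp
  next
    case (Suc i')
    have "(\<Sum>j<N. (if Suc j = i then v j else 0)) = (\<Sum>j<N. (if j = i' then v j else 0))"
      by (rule sum.cong) (auto simp: Suc)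
    also have "\<dots> = v i'" using i Suc by simp
    finally show ?thesis using Suc by simp
  qed
  finally show ?thesis by auto
qed

definition wv :: "nat \<Rightarrow> nat \<Rightarrow> real vec" where
  "wv r n = vec (Suc r) (\<lambda>i. xv r n i)"

lemma TT_wv:
  assumes r: "1 \<le> r"
  shows "TT (Suc r) *\<^sub>v wv r n = (if n = 0 then unit_vec (Suc r) 0 else wv r (n - 1))"
proof (rule eq_vecI)
  fix i assume "i < dim_vec (if n = 0 then unit_vec (Suc r) 0 else wv r (n - 1))"
  then have i: "i < Suc r" by (cases "n = 0") (auto simp: wv_def)
  have "(TT (Suc r) *\<^sub>v wv r n) $ i = (\<Sum>j<Suc r. TT (Suc r) $$ (i, j) * xv r n j)"
    using i by (simp add: wv_def scalar_prod_def lessThan_atLeast0 Matrix.row_def)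
  also have "\<dots> = (if i = 0 then xv r n 0 else xv r n (i - 1) + 2 * xv r n i) + (if Suc i < Suc r then xv r n (Suc i) else 0)"
    by (rule TT_mult_sum[OF i])
  also have "\<dots> = (if i = 0 then xv r n 0 + xv r n 1 else xv r n (i - 1) + 2 * xv r n i + xv r n (Suc i))"
    using r i xv_last[of r n] by (cases "Suc i < Suc r") (auto simp: less_Suc_eq)
  also have "\<dots> = (if n = 0 then unit_vec (Suc r) 0 else wv r (n - 1)) $ i"
  proof (cases i)
    case 0 then show ?thesis using xv_row0[of r n] by (simp add: wv_def)
  next
    case (Suc j)
    then have j: "j < r" using i by simp
    show ?thesis using xv_rowi[OF j, of n] Suc i by (simp add: wv_def)
  qed
  finally show "(TT (Suc r) *\<^sub>v wv r n) $ i = (if n = 0 then unit_vec (Suc r) 0 else wv r (n - 1)) $ i" .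
qed (auto simp: wv_def)

lemma TT_inj:
  assumes a: "a \<in> carrier_vec N" and b: "b \<in> carrier_vec N" and e: "TT N *\<^sub>v a = TT N *\<^sub>v b"
  shows "a = b"
proof -
  have "a = (SS N * TT N) *\<^sub>v a" using a SS_TT by simp
  also have "\<dots> = SS N *\<^sub>v (TT N *\<^sub>v a)" using a by (simp add: assoc_mult_mat_vec[of _ N N _ N])
  also have "\<dots> = SS N *\<^sub>v (TT N *\<^sub>v b)" using e by simp
  also have "\<dots> = (SS N * TT N) *\<^sub>v b" using b by (simp add: assoc_mult_mat_vec[of _ N N _ N])
  also have "\<dots> = b" using b SS_TT by simp
  finally show ?thesis .
qed

lemma uu_neg:
  assumes r: "1 \<le> r"
  shows "uu (Suc r) (- int (Suc n)) = xv r n 0"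
proof -
  define N where "N = Suc r"
  define cv where "cv n = col (MM N (- int (Suc n))) 0" for n
  have cvc: "cv n \<in> carrier_vec N" for n unfolding cv_def carrier_vec_def by simp
  have wvc: "wv r n \<in> carrier_vec N" for n unfolding wv_def N_def by simp
  have Tcv: "TT N *\<^sub>v cv n = col (MM N (- int n)) 0" for n
  proof -
    have "MM N (- int (Suc n) + 1) = TT N * MM N (- int (Suc n))" using MM_Suc by blast
    moreover have "- int (Suc n) + 1 = - int n" by simp
    ultimately have "MM N (- int n) = TT N * MM N (- int (Suc n))" by simp
    then show ?thesis unfolding cv_def using col_mult2[OF TT_carrier MM_carrier, of 0 N] by (simp add: N_def)
  qed
  have "wv r n = cv n"
  proof (induction n)
    case 0
    have "TT N *\<^sub>v wv r 0 = unit_vec N 0" using TT_wv[OF r, of 0] unfolding N_def by simp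
    moreover have "TT N *\<^sub>v cv 0 = unit_vec N 0" using Tcv[of 0] MM_0 by (simp add: N_def)
    ultimately show ?case using TT_inj[OF wvc cvc] by simp
  next
    case (Suc n)
    have "TT N *\<^sub>v wv r (Suc n) = wv r n" using TT_wv[OF r, of "Suc n"] unfolding N_def by simp
    moreover have "TT N *\<^sub>v cv (Suc n) = cv n" using Tcv[of "Suc n"] unfolding cv_def by simp
    ultimately show ?case using TT_inj[OF wvc cvc] Suc by simp
  qed
  then have "wv r n $ 0 = cv n $ 0" by simp
  then show ?thesis unfolding uu_def cv_def wv_def N_def by simp
qed



definition Rp :: "nat \<Rightarrow> nat \<Rightarrow> int \<Rightarrow> real" where
  "Rp r a m = FF (Suc r) a (1 + int r - m - int a)"

lemma Rp_Q:
  assumes a: "1 \<le> a"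
  shows "Rp r a (m + 1) * Rp r a (m - 1) = (Rp r a m)\<^sup>2 + Rp r (a + 1) m * Rp r (a - 1) m"
proof -
  obtain b where b: "a = Suc b" using a by (cases a) auto
  define q where "q = int r - m - int a"
  have e1: "Rp r a (m + 1) = FF (Suc r) (Suc b) q" unfolding Rp_def q_def b by (simp add: algebra_simps)
  have e2: "Rp r a (m - 1) = FF (Suc r) (Suc b) (q + 2)" unfolding Rp_def q_def b by (simp add: algebra_simps)
  have e3: "Rp r a m = FF (Suc r) (Suc b) (q + 1)" unfolding Rp_def q_def b by (simp add: algebra_simps)
  have e4: "Rp r (a + 1) m = FF (Suc r) (Suc (Suc b)) q" unfolding Rp_def q_def b by (simp add: algebra_simps)
  have e5: "Rp r (a - 1) m = FF (Suc r) b (q + 2)" unfolding Rp_def q_def b by (simp add: algebra_simps)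
  show ?thesis unfolding e1 e2 e3 e4 e5 using FF_Q[of "Suc r" b q] by (simp add: algebra_simps)
qed

lemma Rp_0: "Rp r 0 m = 1" unfolding Rp_def by (rule FF_0)

lemma Rp_top: "Rp r (r + 1) m = 1" unfolding Rp_def using FF_full by simp

lemma Rp_stair:
  assumes "a \<le> r"
  shows "Rp r a (int r - int a) = 1" "Rp r a (int r - int a + 1) = 1"
proof -
  have "Rp r a (int r - int a) = FF (Suc r) a 1" unfolding Rp_def by simp
  then show "Rp r a (int r - int a) = 1" using FF_stair1[of a "Suc r"] assms by simp
  have "Rp r a (int r - int a + 1) = FF (Suc r) a 0" unfolding Rp_def by simp
  then show "Rp r a (int r - int a + 1) = 1" using FF_stair0[of a "Suc r"] assms by simp
qed

lemma Rp_1: "Rp r 1 (int n + int r - 1) = uu (Suc r) (1 - int n)"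
  unfolding Rp_def FF_1 by (simp add: algebra_simps)

lemma uniq:
  fixes R :: "nat \<Rightarrow> int \<Rightarrow> real"
  assumes Q: "is_Q_system r R"
    and init: "\<forall>\<alpha>. 1 \<le> \<alpha> \<and> \<alpha> \<le> r \<longrightarrow>
           R \<alpha> (int r - int \<alpha>) = 1 \<and> R \<alpha> (int r - int \<alpha> + 1) = 1"
  shows "\<forall>a. 1 \<le> a \<and> a \<le> r \<and> r - a \<le> m \<longrightarrow> R a (int m) > 0 \<and> R a (int m) = Rp r a (int m)"
proof (induction m rule: less_induct)
  case (less m)
  show ?case
  proof (intro allI impI)
    fix a assume a: "1 \<le> a \<and> a \<le> r \<and> r - a \<le> m"
    show "R a (int m) > 0 \<and> R a (int m) = Rp r a (int m)"
    proof (cases "m \<le> r - a + 1")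
      case True
      then have "int m = int r - int a \<or> int m = int r - int a + 1" using a by auto
      then show ?thesis using init a Rp_stair[of a r] by auto
    next
      case False
      define m0 where "m0 = m - 1"
      have m0: "m = Suc m0" "r - a + 1 \<le> m0" "1 \<le> m0" using False a unfolding m0_def by auto
      have im: "int m = int m0 + 1" "int (m0 - 1) = int m0 - 1" using m0 by auto
      have Qa: "R a (int m0 + 1) * R a (int m0 - 1) = (R a (int m0))\<^sup>2 + R (a + 1) (int m0) * R (a - 1) (int m0)"
        using Q a unfolding is_Q_system_def by auto
      have Qp: "Rp r a (int m0 + 1) * Rp r a (int m0 - 1) = (Rp r a (int m0))\<^sup>2 + Rp r (a + 1) (int m0) * Rp r (a - 1) (int m0)"
        using Rp_Q a by auto
      have I1: "R a (int m0) > 0 \<and> R a (int m0) = Rp r a (int m0)" using less[of m0] m0 a by auto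
      have I2: "R a (int m0 - 1) > 0 \<and> R a (int m0 - 1) = Rp r a (int m0 - 1)"
      proof -
        have "m0 - 1 < m" "r - a \<le> m0 - 1" using m0 by auto
        then have "R a (int (m0 - 1)) > 0 \<and> R a (int (m0 - 1)) = Rp r a (int (m0 - 1))"
          using less[of "m0 - 1"] a by blast
        then show ?thesis unfolding im(2) .
      qed
      have I3: "R (a + 1) (int m0) > 0 \<and> R (a + 1) (int m0) = Rp r (a + 1) (int m0)"
      proof (cases "a + 1 \<le> r")
        case True then show ?thesis using less[of m0] m0 a by auto
      next
        case False
        then have "a + 1 = r + 1" using a by auto
        then show ?thesis using Q Rp_top[of r] unfolding is_Q_system_def by auto
      qed
      have I4: "R (a - 1) (int m0) > 0 \<and> R (a - 1) (int m0) = Rp r (a - 1) (int m0)"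
      proof (cases "a = 1")
        case False
        have "1 \<le> a - 1 \<and> a - 1 \<le> r \<and> r - (a - 1) \<le> m0" using False a m0 by auto
        then show ?thesis using less[of m0] m0 by blast
      next
        case True
        then show ?thesis using Q Rp_0[of r] unfolding is_Q_system_def by auto
      qed
      define X where "X = R a (int m0 - 1)"
      define Y where "Y = (R a (int m0))\<^sup>2 + R (a + 1) (int m0) * R (a - 1) (int m0)"
      have X: "X > 0" using I2 unfolding X_def by simp
      have Y: "Y > 0" using I3 I4 unfolding Y_def by (simp add: add_nonneg_pos)
      have A: "R a (int m0 + 1) * X = Y" using Qa unfolding X_def Y_def .
      have B: "Rp r a (int m0 + 1) * X = Y" using Qp I1 I2 I3 I4 unfolding X_def Y_def by simp
      have "R a (int m0 + 1) > 0"
      proof (rule ccontr)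
        assume "\<not> R a (int m0 + 1) > 0"
        then have "R a (int m0 + 1) * X \<le> 0" using X by (simp add: mult_nonpos_nonneg)
        then show False using A Y by simp
      qed
      moreover have "R a (int m0 + 1) = Rp r a (int m0 + 1)" using A B X by (metis less_irrefl mult_right_cancel)
      ultimately show ?thesis using im by simp
    qed
  qed
qed


lemma evp_shift: "evp r = evp (Suc r) + [:0, 1:] * sp (Suc r)"
proof -
  define c where "c = [:2, -1::real:]"
  define Xp where "Xp = [:0, 1::real:]"
  have s: "sp (Suc (Suc r)) = c * sp (Suc r) - sp r" unfolding c_def by simp
  show ?thesis unfolding evp_def s c_def two_minus_X Xp_def[symmetric]
    by (simp add: algebra_simps del: sp.simps)
qed

theorem mainTheorem16:
  fixes r :: nat and R :: "nat \<Rightarrow> int \<Rightarrow> real"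
  assumes "r \<ge> 1"
    and "is_Q_system r R"
    and "\<forall>\<alpha>. 1 \<le> \<alpha> \<and> \<alpha> \<le> r \<longrightarrow>
           R \<alpha> (int r - int \<alpha>) = 1 \<and> R \<alpha> (int r - int \<alpha> + 1) = 1"
  shows "Abs_fps (\<lambda>n. R 1 (int n + int r - 1))
           = 1 + fps_X * (fps_of_poly (chebV r) / fps_of_poly (chebV (r + 1)))"
proof -
  note claim = uniq[OF assms(2) assms(3)]
  have L: "R 1 (int n + int r - 1) = uu (Suc r) (1 - int n)" for n
  proof -
    define m where "m = n + r - 1"
    have im: "int m = int n + int r - 1" using assms(1) unfolding m_def by auto
    have "R 1 (int m) > 0 \<and> R 1 (int m) = Rp r 1 (int m)" using claim[of m] assms(1) unfolding m_def by auto
    then show ?thesis using Rp_1[of r n] im by simp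
  qed
  define Vi where "Vi = inverse (fps_of_poly (evp (Suc r)))"
  define z where "z = zz r 0"
  have zdef: "z = fps_of_poly (sp (Suc r)) * Vi" unfolding z_def zz_def Vi_def by simp
  have div: "fps_of_poly (chebV r) / fps_of_poly (chebV (r + 1)) = 1 + fps_X * z"
  proof -
    have "fps_of_poly (chebV r) / fps_of_poly (chebV (r + 1)) = fps_of_poly (evp r) * Vi"
      unfolding chebV_ev Vi_def using evp_at0[of "Suc r"] by (simp add: fps_divide_unit)
    also have "\<dots> = fps_of_poly (evp (Suc r)) * Vi + fps_X * z"
      unfolding evp_shift[of r] zdef by (simp add: fps_of_poly_add fps_of_poly_mult fps_of_poly_fps_X algebra_simps)
    also have "fps_of_poly (evp (Suc r)) * Vi = 1" unfolding Vi_def by (rule Vinv)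
    finally show ?thesis .
  qed
  have div': "fps_of_poly (chebV r) / fps_of_poly (chebV (Suc r)) = 1 + fps_X * z" using div by simp
  show ?thesis
  proof (rule fps_ext)
    fix n
    show "fps_nth (Abs_fps (\<lambda>n. R 1 (int n + int r - 1))) n
        = fps_nth (1 + fps_X * (fps_of_poly (chebV r) / fps_of_poly (chebV (r + 1)))) n"
    proof (cases n)
      case 0
      have "uu (Suc r) 1 = 1" unfolding uu_def MM_1 by (simp add: TT_index)
      then show ?thesis using L[of 0] 0 by (simp add: div)
    next
      case (Suc k)
      show ?thesis
      proof (cases k)
        case 0
        have "uu (Suc r) 0 = 1" unfolding uu_def MM_0 by simp
        then show ?thesis using L[of 1] Suc 0 by (simp add: div div' fps_X_mult_nth)
      next
        case (Suc j)
        have "uu (Suc r) (1 - int n) = uu (Suc r) (- int (Suc j))" using \<open>n = Suc k\<close> Suc by simp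
        also have "\<dots> = xv r j 0" by (rule uu_neg[OF assms(1)])
        finally have "R 1 (int n + int r - 1) = fps_nth z j" using L[of n] unfolding xv_def z_def by simp
        then show ?thesis using \<open>n = Suc k\<close> Suc by (simp add: div div' fps_X_mult_nth)
      qed
    qed
  qed
qed


end
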